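(* Assume $\delta>d$ and $\alpha=\gamma/(\delta-d)$. Then $$\frac{|q(z,w)|/|p(z)|^\alpha}{\big(|w|/|z|^\alpha\big)^d}\longrightarrow 1\quad\text{as } |z|\to\infty \text{ and } |w|/|z|^\alpha\to\infty,$$ and there is $R_0>0$ such that for every $R\ge R_0$ the set $W_R=\{(z,w):|z|>R,\ |w|>R|z|^\alpha\}$ satisfies $f(W_R)\subset W_R$.
   Context: Let $p(z)=z^\delta+O(z^{\delta-1})$ be a monic polynomial of degree $\delta\ge 2$, and let $q(z,w)=b(z)w^d+(\text{terms of lower degree in } w)$ be a polynomial with $d=\deg_w q\ge 2$, where $b$ is a monic polynomial of degree $\gamma\ge 0$. Let $f(z,w)=(p(z),q(z,w))$. For $\delta>d$, define $$\alpha=\max\Big\{\frac{n_j}{\delta-m_j}\;:\; z^{n_j}w^{m_j}\text{ is a monomial appearing in } q \text{ with nonzero coefficient}\Big\}.$$ *)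

theory Defs
  imports "HOL-Analysis.Analysis" "HOL-Computational_Algebra.Polynomial"
begin

text \<open>A polynomial q(z,w) in two variables is represented as a polynomial in w whose
coefficients are polynomials in z: q(z,w) = sum_m (coeff q m)(z) w^m.\<close>

definition eval2 :: "complex poly poly \<Rightarrow> complex \<Rightarrow> complex \<Rightarrow> complex" where
  "eval2 q z w = (\<Sum>m\<le>degree q. poly (coeff q m) z * w ^ m)"

definition monomial_exps :: "complex poly poly \<Rightarrow> (nat \<times> nat) set" where
  "monomial_exps q = {(n, m). coeff (coeff q m) n \<noteq> 0}"

definition alpha_exp :: "nat \<Rightarrow> complex poly poly \<Rightarrow> real" where
  "alpha_exp \<delta> q = Max ((\<lambda>(n, m). real n / (real \<delta> - real m)) ` monomial_exps q)"

definition W_set :: "real \<Rightarrow> real \<Rightarrow> (complex \<times> complex) set" where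
  "W_set \<alpha> R = {(z, w). norm z > R \<and> norm w > R * norm z powr \<alpha>}"

end

theory Submission imports Defs begin
definition S :: "complex poly \<Rightarrow> real" where
  "S c = (\<Sum>n\<le>degree c. norm (coeff c n))"

lemma S_nonneg: "S c \<ge> 0" unfolding S_def by (intro sum_nonneg) auto

lemma poly_bound:
  fixes c :: "complex poly" and z :: complex and e :: real
  assumes A1: "norm z \<ge> 1" and ce: "\<And>n. coeff c n \<noteq> 0 \<Longrightarrow> real n \<le> e"
  shows "norm (poly c z) \<le> S c * norm z powr e"
proof -
  have "norm (poly c z) = norm (\<Sum>n\<le>degree c. coeff c n * z^n)" by (simp add: poly_altdef)
  also have "\<dots> \<le> (\<Sum>n\<le>degree c. norm (coeff c n) * norm z ^ n)"
    by (rule order_trans[OF norm_sum]) (simp add: norm_mult norm_power)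
  also have "\<dots> \<le> (\<Sum>n\<le>degree c. norm (coeff c n) * norm z powr e)"
  proof (rule sum_mono)
    fix n assume "n \<in> {..degree c}"
    show "norm (coeff c n) * norm z ^ n \<le> norm (coeff c n) * norm z powr e"
    proof (cases "coeff c n = 0")
      case False
      have "norm z ^ n = norm z powr real n" using A1 by (subst powr_realpow) auto
      also have "\<dots> \<le> norm z powr e" using A1 ce[OF False] by (intro powr_mono) auto
      finally show ?thesis by (intro mult_left_mono) auto
    qed simp
  qed
  also have "\<dots> = S c * norm z powr e" by (simp add: S_def sum_distrib_right)
  finally show ?thesis .
qed

lemma eval2_split:
  "eval2 q z w = (\<Sum>m<degree q. poly (coeff q m) z * w^m) + poly (lead_coeff q) z * w ^ degree q"
  unfolding eval2_def by (simp add: lessThan_Suc_atMost[symmetric])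

lemma term_bound:
  fixes A W u \<alpha> :: real and m d \<gamma> \<delta> :: nat
  assumes A1: "A \<ge> 1" and W: "W > 0" and md: "m < d" and dd: "d < \<delta>"
    and gam: "\<alpha> * (real \<delta> - real d) = real \<gamma>"
    and u1: "A powr \<alpha> \<le> W"
  shows "A powr (\<alpha> * (real \<delta> - real m)) * W ^ m \<le> (A powr \<alpha> / W) * (A ^ \<gamma> * W ^ d)"
proof -
  define u where "u = A powr \<alpha> / W"
  have u0: "u > 0" using A1 W by (simp add: u_def)
  have uu: "u \<le> 1" using u1 W by (simp add: u_def)
  have Au: "A powr \<alpha> = u * W" using W by (simp add: u_def)
  have e: "\<alpha> * (real \<delta> - real m) = real \<gamma> + \<alpha> * real (d - m)"
    using md gam by (simp add: of_nat_diff algebra_simps)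
  have "A powr (\<alpha> * (real \<delta> - real m)) = A ^ \<gamma> * (A powr \<alpha>) ^ (d - m)"
    using A1 by (simp add: e powr_add powr_realpow powr_powr[symmetric] mult.commute)
  also have "\<dots> = A ^ \<gamma> * u ^ (d - m) * W ^ (d - m)" by (simp add: Au power_mult_distrib)
  finally have 1: "A powr (\<alpha> * (real \<delta> - real m)) * W ^ m = A ^ \<gamma> * u ^ (d - m) * W ^ d"
    using md by (simp add: mult.assoc power_add[symmetric])
  have "u ^ (d - m) \<le> u ^ 1" using md u0 uu
    by (intro power_decreasing) auto
  hence "u ^ (d - m) \<le> u" by simp
  hence "A ^ \<gamma> * u ^ (d - m) * W ^ d \<le> A ^ \<gamma> * u * W ^ d"
    using A1 W by (intro mult_right_mono mult_left_mono) auto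
  with 1 show ?thesis by (simp add: u_def mult_ac)
qed

lemma q_bound:
  fixes q :: "complex poly poly" and z w :: complex and \<alpha> :: real and \<delta> :: nat
  assumes ab: "\<And>n m. coeff (coeff q m) n \<noteq> 0 \<Longrightarrow> real n \<le> \<alpha> * (real \<delta> - real m)"
    and gam: "\<alpha> * (real \<delta> - real (degree q)) = real (degree (lead_coeff q))"
    and lc: "lead_coeff (lead_coeff q) = 1"
    and dd: "degree q < \<delta>"
    and A1: "norm z \<ge> 1" and u1: "norm z powr \<alpha> \<le> norm w"
  shows "norm (eval2 q z w - z ^ degree (lead_coeff q) * w ^ degree q)
     \<le> ((\<Sum>m<degree q. S (coeff q m)) * (norm z powr \<alpha> / norm w)
         + S (lead_coeff q - monom 1 (degree (lead_coeff q))) / norm z)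
        * (norm z ^ degree (lead_coeff q) * norm w ^ degree q)"
proof -
  define d where "d = degree q"
  define b where "b = lead_coeff q"
  define \<gamma> where "\<gamma> = degree b"
  define A where "A = norm z"
  define W where "W = norm w"
  define u where "u = A powr \<alpha> / W"
  have A1': "A \<ge> 1" using A1 by (simp add: A_def)
  have W0: "W > 0" using u1 A1' unfolding A_def W_def
    by (metis less_le_trans powr_gt_zero zero_less_one less_le_trans le_less_trans not_le order_le_less_trans) 
  have eq: "eval2 q z w - z ^ \<gamma> * w ^ d = (\<Sum>m<d. poly (coeff q m) z * w^m) + poly (b - monom 1 \<gamma>) z * w^d"
    by (simp add: eval2_split poly_monom algebra_simps d_def b_def)
  have "norm (eval2 q z w - z ^ \<gamma> * w ^ d) \<le> (\<Sum>m<d. norm (poly (coeff q m) z * w^m)) + norm (poly (b - monom 1 \<gamma>) z * w^d)"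
    unfolding eq by (rule order_trans[OF norm_triangle_ineq add_right_mono[OF norm_sum]])
  also have "\<dots> \<le> (\<Sum>m<d. S (coeff q m) * (u * (A ^ \<gamma> * W ^ d))) + S (b - monom 1 \<gamma>) * (A ^ \<gamma> * W ^ d / A)"
  proof (rule add_mono)
    show "(\<Sum>m<d. norm (poly (coeff q m) z * w^m)) \<le> (\<Sum>m<d. S (coeff q m) * (u * (A ^ \<gamma> * W ^ d)))"
    proof (rule sum_mono)
      fix m assume "m \<in> {..<d}"
      hence md: "m < d" by simp
      have "norm (poly (coeff q m) z * w^m) = norm (poly (coeff q m) z) * W ^ m"
        by (simp add: norm_mult norm_power W_def)
      also have "\<dots> \<le> S (coeff q m) * A powr (\<alpha> * (real \<delta> - real m)) * W ^ m"
        using poly_bound[OF A1 ab, of "coeff q m" m] by (intro mult_right_mono) (auto simp: A_def W_def)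
      also have "\<dots> \<le> S (coeff q m) * (u * (A ^ \<gamma> * W ^ d))"
        unfolding mult.assoc using term_bound[OF A1' W0 md, of \<delta> \<alpha> \<gamma>] dd gam u1 S_nonneg
        by (intro mult_left_mono) (auto simp: d_def \<gamma>_def b_def u_def A_def W_def)
      finally show "norm (poly (coeff q m) z * w^m) \<le> S (coeff q m) * (u * (A ^ \<gamma> * W ^ d))" .
    qed
  next
    have ce: "real n \<le> real \<gamma> - 1" if "coeff (b - monom 1 \<gamma>) n \<noteq> 0" for n
    proof -
      have "n \<noteq> \<gamma>" using that lc by (auto simp: b_def \<gamma>_def)
      moreover have "\<not> n > \<gamma>" using that by (auto simp: \<gamma>_def coeff_eq_0 coeff_monom)
      ultimately show ?thesis by linarith
    qed
    have "norm (poly (b - monom 1 \<gamma>) z * w^d) = norm (poly (b - monom 1 \<gamma>) z) * W ^ d"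
      by (simp add: norm_mult norm_power W_def)
    also have "\<dots> \<le> S (b - monom 1 \<gamma>) * A powr (real \<gamma> - 1) * W ^ d"
    proof (rule mult_right_mono)
      show "norm (poly (b - monom 1 \<gamma>) z) \<le> S (b - monom 1 \<gamma>) * A powr (real \<gamma> - 1)"
        unfolding A_def by (rule poly_bound[OF A1]) (rule ce)
    qed (simp add: W_def)
    also have "A powr (real \<gamma> - 1) = A ^ \<gamma> / A" using A1' by (simp add: powr_diff powr_realpow)
    finally show "norm (poly (b - monom 1 \<gamma>) z * w^d) \<le> S (b - monom 1 \<gamma>) * (A ^ \<gamma> * W ^ d / A)"
      by (simp add: mult_ac)
  qed
  also have "\<dots> = (\<Sum>m<d. S (coeff q m)) * (u * (A ^ \<gamma> * W ^ d)) + S (b - monom 1 \<gamma>) * (A ^ \<gamma> * W ^ d / A)"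
    by (simp only: sum_distrib_right)
  also have "\<dots> = ((\<Sum>m<d. S (coeff q m)) * u + S (b - monom 1 \<gamma>) / A) * (A ^ \<gamma> * W ^ d)"
    by (simp add: algebra_simps)
  finally show ?thesis by (simp add: d_def b_def \<gamma>_def A_def W_def u_def)
qed

theorem lemma4p5:
  fixes p :: "complex poly" and q :: "complex poly poly" and \<delta> :: nat
  assumes "degree p = \<delta>" and "lead_coeff p = 1" and "\<delta> \<ge> 2"
    and "degree q \<ge> 2"
    and "lead_coeff (lead_coeff q) = 1"
    and "\<delta> > degree q"
    and "alpha_exp \<delta> q = real (degree (lead_coeff q)) / (real \<delta> - real (degree q))"
  shows "((\<lambda>(z, w). (norm (eval2 q z w) / norm (poly p z) powr alpha_exp \<delta> q)
                    / (norm w / norm z powr alpha_exp \<delta> q) ^ degree q) \<longlongrightarrow> 1)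
           (inf (filtercomap (\<lambda>(z, w). norm z) at_top)
                (filtercomap (\<lambda>(z, w). norm w / norm z powr alpha_exp \<delta> q) at_top))
         \<and> (\<exists>R0>0. \<forall>R\<ge>R0. (\<lambda>(z, w). (poly p z, eval2 q z w)) ` W_set (alpha_exp \<delta> q) R
                          \<subseteq> W_set (alpha_exp \<delta> q) R)"
proof -
  note degp = assms(1) and lcp = assms(2) and d2 = assms(3) and dq2 = assms(4)
    and lcq = assms(5) and dd = assms(6) and aeq = assms(7)
  define d where "d = degree q"
  define \<gamma> where "\<gamma> = degree (lead_coeff q)"
  define \<alpha> where "\<alpha> = alpha_exp \<delta> q"
  have dpos: "real \<delta> - real d > 0" using dd by (simp add: d_def)
  have gam: "\<alpha> * (real \<delta> - real (degree q)) = real (degree (lead_coeff q))"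
    using aeq dpos by (simp add: \<alpha>_def d_def)
  define K where "K = (\<Sum>m\<le>d. degree (coeff q m))"
  have sub: "monomial_exps q \<subseteq> {..K} \<times> {..d}"
  proof
    fix x assume "x \<in> monomial_exps q"
    then obtain n m where x: "x = (n, m)" and c: "coeff (coeff q m) n \<noteq> 0"
      by (auto simp: monomial_exps_def)
    have cm: "coeff q m \<noteq> 0" using c by auto
    hence md: "m \<le> d" by (simp add: d_def le_degree)
    have "n \<le> degree (coeff q m)" using c by (simp add: le_degree)
    also have "\<dots> \<le> K" unfolding K_def using md by (intro member_le_sum) auto
    finally show "x \<in> {..K} \<times> {..d}" using x md by auto
  qed
  have fin: "finite (monomial_exps q)" by (rule finite_subset[OF sub]) auto
  have ab: "real n \<le> \<alpha> * (real \<delta> - real m)" if c: "coeff (coeff q m) n \<noteq> 0" for n m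
  proof -
    have mem: "(n, m) \<in> monomial_exps q" using c by (simp add: monomial_exps_def)
    have "coeff q m \<noteq> 0" using c by auto
    hence "m \<le> d" by (simp add: d_def le_degree)
    hence pos: "real \<delta> - real m > 0" using dd by (simp add: d_def)
    have "real n / (real \<delta> - real m) \<le> \<alpha>" unfolding \<alpha>_def alpha_exp_def
      by (rule Max_ge) (use fin mem in force)+
    thus ?thesis using pos by (simp add: pos_divide_le_eq mult.commute)
  qed
  define F where "F = inf (filtercomap (\<lambda>(z::complex, w::complex). norm z) at_top)
                (filtercomap (\<lambda>(z, w). norm w / norm z powr \<alpha>) at_top)"
  have limA: "filterlim (\<lambda>(z::complex, w::complex). norm z) at_top F"
    unfolding F_def by (rule filterlim_mono[OF filterlim_filtercomap order_refl inf_le1])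
  have limt: "filterlim (\<lambda>(z::complex, w::complex). norm w / norm z powr \<alpha>) at_top F"
    unfolding F_def by (rule filterlim_mono[OF filterlim_filtercomap order_refl inf_le2])
  have evA: "eventually (\<lambda>x. Z \<le> norm (fst x)) F" for Z
    using limA[unfolded filterlim_at_top] by (simp add: case_prod_beta)
  have evt: "eventually (\<lambda>x. Z \<le> norm (snd x) / norm (fst x) powr \<alpha>) F" for Z
    using limt[unfolded filterlim_at_top] by (simp add: case_prod_beta)
  have invA: "((\<lambda>x. inverse (norm (fst x))) \<longlongrightarrow> 0) F"
    using tendsto_inverse_0_at_top[OF limA] by (simp add: case_prod_beta)
  have invt: "((\<lambda>x. inverse (norm (snd x) / norm (fst x) powr \<alpha>)) \<longlongrightarrow> 0) F"
    using tendsto_inverse_0_at_top[OF limt] by (simp add: case_prod_beta)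
  define X where "X x = norm (eval2 q (fst x) (snd x)) / (norm (fst x) ^ \<gamma> * norm (snd x) ^ d)" for x
  define Y where "Y (x::complex \<times> complex) = norm (poly p (fst x)) / norm (fst x) ^ \<delta>" for x
  define C1 where "C1 = (\<Sum>m<degree q. S (coeff q m))"
  define C2 where "C2 = S (lead_coeff q - monom 1 (degree (lead_coeff q)))"
  define C3 where "C3 = S (p - monom 1 \<delta>)"
  have Xb: "eventually (\<lambda>x. norm (X x - 1) \<le> C1 * inverse (norm (snd x) / norm (fst x) powr \<alpha>)
             + C2 * inverse (norm (fst x))) F"
    using eventually_conj[OF evA[of 1] evt[of 1]]
  proof eventually_elim
    case (elim x)
    obtain z w where x: "x = (z, w)" by force
    have A1: "norm z \<ge> 1" using elim x by simp
    have z0: "z \<noteq> 0" using A1 by (cases "z = 0") auto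
    hence Ap: "norm z powr \<alpha> > 0" by simp
    have u1: "norm z powr \<alpha> \<le> norm w" using elim x Ap by (simp add: le_divide_eq)
    have W0: "norm w > 0" using u1 Ap by linarith
    define N where "N = norm z ^ \<gamma> * norm w ^ d"
    have N0: "N > 0" using z0 W0 by (simp add: N_def)
    have NN: "N = norm (z ^ \<gamma> * w ^ d)" by (simp add: N_def norm_mult norm_power)
    have Xe: "X x = norm (eval2 q z w) / N" by (simp add: X_def x N_def)
    have "norm (eval2 q z w) / N - 1 = (norm (eval2 q z w) - N) / N" using N0 by (simp add: field_simps)
    hence "norm (X x - 1) = \<bar>norm (eval2 q z w) - N\<bar> / N"
      using N0 by (simp add: Xe abs_divide)
    also have "\<dots> \<le> norm (eval2 q z w - z ^ \<gamma> * w ^ d) / N"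
      unfolding NN using N0 NN by (intro divide_right_mono norm_triangle_ineq3) auto
    also have "\<dots> \<le> (C1 * (norm z powr \<alpha> / norm w) + C2 / norm z) * N / N"
      using q_bound[OF ab gam lcq dd A1 u1] N0
      by (intro divide_right_mono) (auto simp: C1_def C2_def N_def d_def \<gamma>_def)
    also have "\<dots> = C1 * inverse (norm w / norm z powr \<alpha>) + C2 * inverse (norm z)"
      using N0 by (simp add: field_simps)
    finally show ?case by (simp add: x)
  qed
  have X1: "(X \<longlongrightarrow> 1) F"
  proof -
    have "((\<lambda>x. C1 * inverse (norm (snd x) / norm (fst x) powr \<alpha>) + C2 * inverse (norm (fst x))) \<longlongrightarrow> 0) F"
      using tendsto_add[OF tendsto_mult[OF tendsto_const invt] tendsto_mult[OF tendsto_const invA]]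
      by simp
    hence "((\<lambda>x. X x - 1) \<longlongrightarrow> 0) F" by (rule Lim_null_comparison[OF Xb])
    thus ?thesis by (simp add: LIM_zero_iff)
  qed
  have Yb: "eventually (\<lambda>x. norm (Y x - 1) \<le> C3 * inverse (norm (fst x))) F"
    using evA[of 1]
  proof eventually_elim
    case (elim x)
    obtain z w where x: "x = (z, w)" by force
    have A1: "norm z \<ge> 1" using elim x by simp
    define N where "N = norm z ^ \<delta>"
    have z0: "z \<noteq> 0" using A1 by (cases "z = 0") auto
    have N0: "N > 0" using z0 by (simp add: N_def)
    have NN: "N = norm (z ^ \<delta>)" by (simp add: N_def norm_power)
    have ce: "real n \<le> real \<delta> - 1" if "coeff (p - monom 1 \<delta>) n \<noteq> 0" for n
    proof -
      have "n \<noteq> \<delta>" using that lcp degp by auto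
      moreover have "\<not> n > \<delta>" using that degp by (auto simp: coeff_eq_0 coeff_monom)
      ultimately show ?thesis by linarith
    qed
    have pbp: "norm (poly (p - monom 1 \<delta>) z) \<le> C3 * norm z powr (real \<delta> - 1)"
      unfolding C3_def by (rule poly_bound[OF A1]) (rule ce)
    have Ye: "Y x = norm (poly p z) / N" by (simp add: Y_def x N_def)
    have "norm (poly p z) / N - 1 = (norm (poly p z) - N) / N" using N0 by (simp add: field_simps)
    hence "norm (Y x - 1) = \<bar>norm (poly p z) - N\<bar> / N"
      using N0 by (simp add: Ye abs_divide)
    also have "\<dots> \<le> norm (poly p z - z ^ \<delta>) / N"
      unfolding NN using N0 NN by (intro divide_right_mono norm_triangle_ineq3) auto
    also have "poly p z - z ^ \<delta> = poly (p - monom 1 \<delta>) z" by (simp add: poly_monom)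
    also have "norm (poly (p - monom 1 \<delta>) z) / N \<le> C3 * norm z powr (real \<delta> - 1) / N"
      using pbp N0 by (intro divide_right_mono) auto
    also have "norm z powr (real \<delta> - 1) = N / norm z"
      using z0 by (simp add: powr_diff powr_realpow[of "norm z"] N_def)
    also have "C3 * (N / norm z) / N = C3 * inverse (norm z)" using N0 by (simp add: field_simps)
    finally show ?case by (simp add: x)
  qed
  have Y1: "(Y \<longlongrightarrow> 1) F"
  proof -
    have "((\<lambda>x. C3 * inverse (norm (fst x))) \<longlongrightarrow> 0) F"
      using tendsto_mult[OF tendsto_const invA] by simp
    hence "((\<lambda>x. Y x - 1) \<longlongrightarrow> 0) F" by (rule Lim_null_comparison[OF Yb])
    thus ?thesis by (simp add: LIM_zero_iff)
  qed
  define ratio where "ratio = (\<lambda>(z, w). (norm (eval2 q z w) / norm (poly p z) powr \<alpha>)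
                    / (norm w / norm z powr \<alpha>) ^ d)"
  have evY: "eventually (\<lambda>x. Y x > 1/2) F" using order_tendstoD(1)[OF Y1, of "1/2"] by simp
  have req: "eventually (\<lambda>x. ratio x = X x / Y x powr \<alpha>) F"
    using eventually_conj[OF eventually_conj[OF evA[of 1] evt[of 1]] evY]
  proof eventually_elim
    case (elim x)
    obtain z w where x: "x = (z, w)" by force
    define A where "A = norm z"
    define W where "W = norm w"
    define P where "P = norm (poly p z)"
    define Q where "Q = norm (eval2 q z w)"
    define a where "a = A powr \<alpha>"
    have A1: "A \<ge> 1" using elim x by (simp add: A_def)
    have a0: "a > 0" using A1 by (simp add: a_def)
    have aW: "a \<le> W" using elim x a0 by (simp add: le_divide_eq A_def W_def a_def)
    have W0: "W > 0" using aW a0 by linarith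
    have P0: "P > 0" using elim x A1 by (auto simp: Y_def P_def A_def)
    have "A ^ \<gamma> = A powr (\<alpha> * real \<delta> - \<alpha> * real d)" using A1 gam
      by (simp add: powr_realpow[symmetric] \<gamma>_def d_def algebra_simps)
    also have "\<dots> = a ^ \<delta> / a ^ d" using A1
      by (simp add: powr_diff a_def powr_powr[symmetric] powr_realpow)
    finally have Ag: "A ^ \<gamma> = a ^ \<delta> / a ^ d" .
    have Ad: "(A ^ \<delta>) powr \<alpha> = a ^ \<delta>" using A1
      by (simp add: a_def powr_realpow[symmetric] powr_powr mult.commute)
    have "X x / Y x powr \<alpha> = (Q / (a ^ \<delta> / a ^ d * W ^ d)) / (P powr \<alpha> / a ^ \<delta>)"
      by (simp add: X_def Y_def x Q_def A_def[symmetric] W_def[symmetric] P_def[symmetric] Ag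
            powr_divide Ad)
    also have "\<dots> = (Q / P powr \<alpha>) / (W / a) ^ d"
      using a0 W0 P0 by (simp add: field_simps power_divide)
    finally show ?case by (simp add: ratio_def x Q_def P_def W_def a_def A_def)
  qed
  have lim: "(ratio \<longlongrightarrow> 1) F"
  proof -
    have "((\<lambda>x. X x / Y x powr \<alpha>) \<longlongrightarrow> 1 / 1 powr \<alpha>) F"
      by (intro tendsto_divide X1 tendsto_powr Y1 tendsto_const) auto
    hence "((\<lambda>x. X x / Y x powr \<alpha>) \<longlongrightarrow> 1) F" by simp
    thus ?thesis by (rule Lim_transform_eventually) (use req in \<open>simp add: eq_commute\<close>)
  qed
  have ev2: "eventually (\<lambda>x. ratio x > 1/2 \<and> Y x > 1/2) F"
    using eventually_conj[OF order_tendstoD(1)[OF lim, of "1/2"] evY] by simp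
  then obtain Q1 Q2 where Q1: "eventually Q1 (filtercomap (\<lambda>(z::complex, w::complex). norm z) at_top)"
    and Q2: "eventually Q2 (filtercomap (\<lambda>(z::complex, w::complex). norm w / norm z powr \<alpha>) at_top)"
    and QQ: "\<And>x. Q1 x \<Longrightarrow> Q2 x \<Longrightarrow> ratio x > 1/2 \<and> Y x > 1/2"
    unfolding F_def eventually_inf by blast
  obtain N1 where N1: "\<And>x. (\<lambda>(z::complex, w::complex). norm z) x \<ge> N1 \<Longrightarrow> Q1 x"
    using Q1 unfolding eventually_filtercomap_at_top_linorder by blast
  obtain N2 where N2: "\<And>x. (\<lambda>(z::complex, w::complex). norm w / norm z powr \<alpha>) x \<ge> N2 \<Longrightarrow> Q2 x"
    using Q2 unfolding eventually_filtercomap_at_top_linorder by blast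
  define R0 where "R0 = max 2 (max N1 N2)"
  have part2: "\<forall>R\<ge>R0. (\<lambda>(z, w). (poly p z, eval2 q z w)) ` W_set \<alpha> R \<subseteq> W_set \<alpha> R"
  proof (intro allI impI subsetI)
    fix R y assume R: "R \<ge> R0" and y: "y \<in> (\<lambda>(z, w). (poly p z, eval2 q z w)) ` W_set \<alpha> R"
    then obtain z w where y: "y = (poly p z, eval2 q z w)" and zw: "(z, w) \<in> W_set \<alpha> R" by auto
    define A where "A = norm z"
    define W where "W = norm w"
    define t where "t = W / A powr \<alpha>"
    have R2: "R \<ge> 2" using R by (simp add: R0_def)
    have AR: "A > R" using zw by (simp add: W_set_def A_def)
    have A2: "A \<ge> 2" using AR R2 by simp
    have Ap: "A powr \<alpha> > 0" using A2 by simp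
    have tR: "t > R" using zw Ap by (simp add: W_set_def t_def A_def W_def pos_less_divide_eq)
    have q1: "Q1 (z, w)" using N1 AR R by (simp add: R0_def A_def)
    have q2: "Q2 (z, w)" using N2 tR R by (simp add: R0_def t_def W_def A_def)
    have rY: "ratio (z, w) > 1/2" "Y (z, w) > 1/2" using QQ[OF q1 q2] by auto
    define P where "P = norm (poly p z)"
    have z0: "z \<noteq> 0" using A2 by (cases "z = 0") (auto simp: A_def)
    have PY: "P = Y (z, w) * A ^ \<delta>" using z0 by (simp add: Y_def P_def A_def)
    have "A ^ 2 \<le> A ^ \<delta>" using A2 d2 by (intro power_increasing) auto
    moreover have "2 * A \<le> A ^ 2" using A2 by (simp add: power2_eq_square)
    ultimately have h1: "A \<le> (1/2) * A ^ \<delta>" by simp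
    have "(1/2) * A ^ \<delta> < Y (z, w) * A ^ \<delta>" using rY(2) A2
      by (intro mult_strict_right_mono) auto
    hence "P > A" using h1 PY by simp
    hence PR: "P > R" using AR by simp
    have P0: "P > 0" using PR R2 by simp
    have t0: "t > 0" using tR R2 by simp
    have w0: "w \<noteq> 0" using t0 by (auto simp: t_def W_def)
    have "t ^ 2 \<le> t ^ d" using tR R2 dq2 by (intro power_increasing) (auto simp: d_def)
    moreover have "2 * t \<le> t ^ 2" using tR R2 by (simp add: power2_eq_square)
    ultimately have td: "t ^ d > 2 * R" using tR by linarith
    have Qeq: "norm (eval2 q z w) = ratio (z, w) * P powr \<alpha> * t ^ d"
      using P0 t0 z0 w0 by (simp add: ratio_def P_def t_def A_def W_def)
    have "R * P powr \<alpha> = (1/2) * P powr \<alpha> * (2 * R)" by simp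
    also have "\<dots> < ratio (z, w) * P powr \<alpha> * t ^ d"
    proof (rule mult_strict_mono)
      have "P powr \<alpha> > 0" using P0 by simp
      thus "1/2 * P powr \<alpha> < ratio (z, w) * P powr \<alpha>" using rY(1)
        by (intro mult_strict_right_mono) auto
      thus "0 < ratio (z, w) * P powr \<alpha>" using \<open>P powr \<alpha> > 0\<close> by simp
    qed (use td R2 in auto)
    finally show "y \<in> W_set \<alpha> R" using PR Qeq by (simp add: y W_set_def P_def)
  qed
  have R00: "R0 > 0" by (simp add: R0_def)
  show ?thesis
  proof
    show "((\<lambda>(z, w). (norm (eval2 q z w) / norm (poly p z) powr alpha_exp \<delta> q)
                    / (norm w / norm z powr alpha_exp \<delta> q) ^ degree q) \<longlongrightarrow> 1)
           (inf (filtercomap (\<lambda>(z, w). norm z) at_top)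
                (filtercomap (\<lambda>(z, w). norm w / norm z powr alpha_exp \<delta> q) at_top))"
      using lim by (simp only: ratio_def F_def \<alpha>_def d_def)
    show "\<exists>R0>0. \<forall>R\<ge>R0. (\<lambda>(z, w). (poly p z, eval2 q z w)) ` W_set (alpha_exp \<delta> q) R
                          \<subseteq> W_set (alpha_exp \<delta> q) R"
      using R00 part2 unfolding \<alpha>_def by blast
  qed
qed

end
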